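(* Let $V,\mathfrak{a}$ be finite-dimensional vector spaces over $\mathbb{Q}$, and let $\varphi^1_i,\varphi^2_j\in\mathfrak{a}^*$, $\chi^1_i,\chi^2_j\in V^*$ for $i=1,\dots,k_1$, $j=1,\dots,k_2$. For $v\in V(\mathbb{R})=V\otimes\mathbb{R}$ and $l=1,2$ set $P^l(v)=\{\lambda\in\mathfrak{a}(\mathbb{R}):\langle\varphi^l_i,\lambda\rangle\ge-\chi^l_i(v)\ \text{for all } i=1,\dots,k_l\}$. Suppose there is $v\in V(\mathbb{R})$ such that $P^1(v)=P^2(v)$ and this polytope has dimension $\dim\mathfrak{a}(\mathbb{R})$. Then for every neighborhood $O$ of $v$ in $V(\mathbb{R})$ there is $v'\in O\cap V$ with $P^1(v')=P^2(v')$.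
   Context: $\mathfrak{a}(\mathbb{R})=\mathfrak{a}\otimes_{\mathbb{Q}}\mathbb{R}$; elements of $\mathfrak{a}^*$ and $V^*$ are extended $\mathbb{R}$-linearly. $V$ is regarded as the set of rational points of $V(\mathbb{R})$. *)

theory Defs
  imports "HOL-Analysis.Analysis"
begin

text \<open>V(R) is modelled as real^'v, a(R) as real^'a; the rational structure is the
standard one: a vector (or a functional, given by its coefficient vector w.r.t.
the standard basis and the inner product) is rational iff all coordinates are in Rats.\<close>

definition rational_vec :: "real^'n \<Rightarrow> bool" where
  "rational_vec x \<longleftrightarrow> (\<forall>i. x $ i \<in> \<rat>)"

definition polyP :: "nat \<Rightarrow> (nat \<Rightarrow> real^'a) \<Rightarrow> (nat \<Rightarrow> real^'v) \<Rightarrow> real^'v \<Rightarrow> (real^'a) set" where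
  "polyP k ph ch v = {l. \<forall>i<k. ph i \<bullet> l \<ge> - (ch i \<bullet> v)}"

end

theory Submission
  imports Defs
begin


lemma rv_0[simp]: "rational_vec 0" by (simp add: rational_vec_def)
lemma rv_add: "rational_vec x \<Longrightarrow> rational_vec y \<Longrightarrow> rational_vec (x + y)"
  by (simp add: rational_vec_def)
lemma rv_diff: "rational_vec x \<Longrightarrow> rational_vec y \<Longrightarrow> rational_vec (x - y)"
  by (simp add: rational_vec_def)
lemma rv_scale: "c \<in> \<rat> \<Longrightarrow> rational_vec x \<Longrightarrow> rational_vec (c *\<^sub>R x)"
  by (simp add: rational_vec_def)
lemma rv_sum: "(\<And>i. i \<in> S \<Longrightarrow> rational_vec (f i)) \<Longrightarrow> rational_vec (\<Sum>i\<in>S. f i)"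
  by (induction S rule: infinite_finite_induct) (auto intro: rv_add)
lemma rv_inner: "rational_vec x \<Longrightarrow> rational_vec y \<Longrightarrow> x \<bullet> y \<in> \<rat>"
  unfolding rational_vec_def inner_vec_def by (auto intro!: Rats_sum)

lemma rat_dense_vec:
  fixes v :: "real^'n"
  assumes "open S" "v \<in> S"
  shows "\<exists>q\<in>S. rational_vec q"
proof -
  obtain e where e: "e > 0" "ball v e \<subseteq> S" using assms open_contains_ball by blast
  define e' where "e' = e / CARD('n)"
  have e': "e' > 0" using e by (simp add: e'_def)
  have "\<forall>i. \<exists>r\<in>\<rat>. v$i - e' < r \<and> r < v$i + e'"
    using e' by (intro allI Rats_dense_in_real) simp
  then obtain r where r: "\<And>i. r i \<in> \<rat> \<and> v$i - e' < r i \<and> r i < v$i + e'" by metis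
  define q where "q = (\<chi> i. r i)"
  have "dist q v \<le> (\<Sum>i\<in>UNIV. \<bar>(q - v)$i\<bar>)" unfolding dist_norm by (rule norm_le_l1_cart)
  also have "\<dots> < (\<Sum>i\<in>(UNIV::'n set). e')"
  proof (intro sum_strict_mono)
    fix i show "\<bar>(q - v)$i\<bar> < e'" using r[of i] by (auto simp: q_def abs_less_iff)
  qed auto
  also have "\<dots> = e" using e by (simp add: e'_def)
  finally have "q \<in> S" using e by (auto simp: dist_commute)
  moreover have "rational_vec q" using r by (simp add: rational_vec_def q_def)
  ultimately show ?thesis by blast
qed

lemma orth_span:
  fixes x :: "real^'n"
  assumes "\<forall>b\<in>B. x \<bullet> b = 0" "y \<in> span B"
  shows "x \<bullet> y = 0"
  using orthogonal_to_span[OF assms(2), of x] assms(1) by (auto simp: orthogonal_def)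

lemma proj_exists:
  fixes B :: "(real^'n) set"
  assumes "finite B" "\<forall>b\<in>B. rational_vec b"
  shows "\<exists>p. linear p \<and> (\<forall>x. rational_vec x \<longrightarrow> rational_vec (p x)) \<and> (\<forall>x. \<forall>b\<in>B. p x \<bullet> b = 0)
    \<and> (\<forall>x. x - p x \<in> span B) \<and> (\<forall>x. (\<forall>b\<in>B. x \<bullet> b = 0) \<longrightarrow> p x = x)"
  using assms
proof (induction B rule: finite_induct)
  case empty
  show ?case by (rule exI[of _ "\<lambda>x. x"]) (auto intro: bounded_linear.linear[OF bounded_linear_ident])
next
  case (insert a B)
  then obtain p where p: "linear p" "\<forall>x. rational_vec x \<longrightarrow> rational_vec (p x)" "\<forall>x. \<forall>b\<in>B. p x \<bullet> b = 0"
    "\<forall>x. x - p x \<in> span B" "\<forall>x. (\<forall>b\<in>B. x \<bullet> b = 0) \<longrightarrow> p x = x" by auto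
  define a' where "a' = p a"
  have ra: "rational_vec a" using insert by auto
  have ra': "rational_vec a'" using p ra by (simp add: a'_def)
  have aa: "a - a' \<in> span B" using p by (simp add: a'_def)
  have pspan: "p x \<bullet> y = 0" if "y \<in> span B" for x y using orth_span[OF _ that] p by blast
  show ?case
  proof (cases "a' = 0")
    case True
    show ?thesis
    proof (rule exI[of _ p], intro conjI allI impI ballI)
      fix x b assume "b \<in> insert a B"
      then show "p x \<bullet> b = 0" using p pspan[OF aa] True by auto
    next
      fix x show "x - p x \<in> span (insert a B)" using p span_mono[of B "insert a B"] by blast
    next
      fix x assume "\<forall>b\<in>insert a B. x \<bullet> b = 0" then show "p x = x" using p by auto
    qed (use p in auto)
  next
    case False
    define p' where "p' x = p x - ((p x \<bullet> a') / (a' \<bullet> a')) *\<^sub>R a'" for x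
    have a'B: "a' \<bullet> b = 0" if "b \<in> B" for b using p that by (simp add: a'_def)
    have nz: "a' \<bullet> a' \<noteq> 0" using False by simp
    have lin: "linear p'"
      unfolding p'_def
      by (intro linearI) (simp_all add: linear_add[OF p(1)] linear_scale[OF p(1)] inner_add_left
          add_divide_distrib scaleR_add_left scaleR_diff_right)
    have pB: "p' x \<bullet> b = 0" if "b \<in> B" for x b
      using p that a'B by (simp add: p'_def inner_diff_left)
    have pa': "p' x \<bullet> a' = 0" for x using nz by (simp add: p'_def inner_diff_left)
    have pspan': "p' x \<bullet> y = 0" if "y \<in> span B" for x y using orth_span[OF _ that] pB by blast
    have pa: "p' x \<bullet> a = 0" for x
    proof -
      have "p' x \<bullet> a = p' x \<bullet> a' + p' x \<bullet> (a - a')" by (simp add: inner_diff_right)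
      then show ?thesis using pa' pspan'[OF aa] by simp
    qed
    show ?thesis
    proof (rule exI[of _ p'], intro conjI allI impI ballI)
      show "linear p'" by (rule lin)
    next
      fix x :: "real^'n" assume "rational_vec x"
      then have px: "rational_vec (p x)" using p by auto
      show "rational_vec (p' x)" unfolding p'_def
        by (intro rv_diff rv_scale Rats_divide rv_inner px ra')
    next
      fix x b assume "b \<in> insert a B"
      then show "p' x \<bullet> b = 0" using pa pB by auto
    next
      fix x :: "real^'n"
      have "a' \<in> span (insert a B)"
      proof -
        have h1: "a - a' \<in> span (insert a B)" using aa span_mono[of B "insert a B"] by blast
        have h2: "a \<in> span (insert a B)" by (simp add: span_base)
        have "a - (a - a') \<in> span (insert a B)" using span_diff[OF h2 h1] .
        then show ?thesis by simp
      qed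
      moreover have "x - p x \<in> span (insert a B)" using p span_mono[of B "insert a B"] by blast
      ultimately show "x - p' x \<in> span (insert a B)"
      proof -
        have "x - p' x = (x - p x) + ((p x \<bullet> a') / (a' \<bullet> a')) *\<^sub>R a'" by (simp add: p'_def)
        then show ?thesis using span_add span_scale \<open>a' \<in> _\<close> \<open>x - p x \<in> _\<close> by metis
      qed
    next
      fix x assume x: "\<forall>b\<in>insert a B. x \<bullet> b = 0"
      then have px: "p x = x" using p by auto
      have "x \<bullet> (a - a') = 0" using orth_span[OF _ aa] x by auto
      then have "x \<bullet> a' = 0" using x by (simp add: inner_diff_right)
      then show "p' x = x" by (simp add: p'_def px)
    qed
  qed
qed



lemma cone_dense:
  fixes v :: "real^'n"
  assumes "finite D" "\<forall>d\<in>D. rational_vec d" "\<forall>d\<in>D. d \<bullet> v \<ge> 0" "open U" "v \<in> U"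
  shows "\<exists>w\<in>U. rational_vec w \<and> (\<forall>d\<in>D. d \<bullet> w \<ge> 0)"
proof -
  define D0 where "D0 = {d\<in>D. d \<bullet> v = 0}"
  have fD0: "finite D0" using assms(1) by (simp add: D0_def)
  obtain p where p: "linear p" "\<forall>x. rational_vec x \<longrightarrow> rational_vec (p x)" "\<forall>x. \<forall>b\<in>D0. p x \<bullet> b = 0"
    "\<forall>x. (\<forall>b\<in>D0. x \<bullet> b = 0) \<longrightarrow> p x = x"
    using proj_exists[OF fD0] assms(2) by (auto simp: D0_def)
  have pv: "p v = v" using p(4) by (auto simp: D0_def inner_commute)
  have bl: "bounded_linear p" using p(1) linear_conv_bounded_linear by blast
  have cont: "continuous (at x) p" for x using bl by (rule linear_continuous_at)
  have cont2: "continuous (at x) (\<lambda>x. d \<bullet> p x)" for d x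
    by (intro linear_continuous_at bounded_linear_compose[OF bounded_linear_inner_right bl])
  define S where "S = p -` U \<inter> (\<Inter>d\<in>D - D0. (\<lambda>x. d \<bullet> p x) -` {0<..})"
  have "open S" unfolding S_def
    by (intro open_Int open_INT continuous_open_vimage cont cont2 assms ballI finite_Diff) auto
  moreover have "v \<in> S" using assms pv by (auto simp: S_def D0_def less_le)
  ultimately obtain q where q: "q \<in> S" "rational_vec q" using rat_dense_vec by blast
  show ?thesis
  proof (rule bexI[of _ "p q"], intro conjI ballI)
    show "rational_vec (p q)" using p q by auto
    show "p q \<in> U" using q by (auto simp: S_def)
    fix d assume "d \<in> D"
    then show "d \<bullet> p q \<ge> 0"
      using q p(3) by (cases "d \<in> D0") (auto simp: S_def inner_commute less_le)
  qed
qed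

lemma span_image_coeffs:
  fixes f :: "'b \<Rightarrow> 'a::real_vector"
  assumes "finite A" "x \<in> span (f ` A)"
  shows "\<exists>c. x = (\<Sum>j\<in>A. c j *\<^sub>R f j)"
  using assms
proof (induction A arbitrary: x rule: finite_induct)
  case empty then show ?case by simp
next
  case (insert a A)
  from insert.prems obtain t where "x - t *\<^sub>R f a \<in> span (f ` A)" by (auto simp: span_insert)
  then obtain c where c: "x - t *\<^sub>R f a = (\<Sum>j\<in>A. c j *\<^sub>R f j)" using insert.IH by blast
  have "(\<Sum>j\<in>insert a A. (c(a := t)) j *\<^sub>R f j) = t *\<^sub>R f a + (\<Sum>j\<in>A. c j *\<^sub>R f j)"
    using insert.hyps by (simp add: sum.insert) (intro sum.cong, auto)
  then show ?case using c by (metis add.commute diff_add_cancel)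
qed

lemma farkas_real:
  fixes \<phi> :: "nat \<Rightarrow> real^'a" and \<psi> :: "real^'a" and b :: "nat \<Rightarrow> real"
  assumes ne: "\<exists>l. \<forall>i<k. \<phi> i \<bullet> l \<ge> - b i"
    and imp: "\<forall>l. (\<forall>i<k. \<phi> i \<bullet> l \<ge> - b i) \<longrightarrow> \<psi> \<bullet> l \<ge> - c"
  shows "\<exists>\<mu>. (\<forall>i<k. \<mu> i \<ge> 0) \<and> (\<Sum>i<k. \<mu> i *\<^sub>R \<phi> i) = \<psi> \<and> (\<Sum>i<k. \<mu> i * b i) \<le> c"
proof (rule ccontr)
  assume nex: "\<not> ?thesis"
  define K where "K = {z::((real^'a) \<times> real). \<exists>\<mu> t. (\<forall>i<k. \<mu> i \<ge> 0) \<and> t \<ge> 0 \<and>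
      z = ((\<Sum>i<k. \<mu> i *\<^sub>R \<phi> i), (\<Sum>i<k. \<mu> i * b i) + t)}"
  define G where "G = insert (0,1) ((\<lambda>i. (\<phi> i, b i)) ` {..<k})"
  have GK: "G \<subseteq> K"
  proof
    fix g assume "g \<in> G"
    then consider "g = (0,1)" | i where "i < k" "g = (\<phi> i, b i)" by (auto simp: G_def)
    then show "g \<in> K"
    proof cases
      case 1 show ?thesis unfolding K_def 1
        by (intro CollectI exI[of _ "\<lambda>_. 0"] exI[of _ "1::real"]) simp
    next
      case 2
      show ?thesis unfolding K_def 2(2)
        by (intro CollectI exI[of _ "\<lambda>j. if j = i then 1 else 0"] exI[of _ "0::real"])
           (use 2 in \<open>auto simp: if_distrib[of "\<lambda>x. x *\<^sub>R _"] if_distrib[of "\<lambda>x. x * _"] cong: if_cong\<close>)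
    qed
  qed
  have convK: "convex K"
    unfolding convex_def
  proof (intro ballI allI impI)
    fix x y and u v :: real assume "x \<in> K" "y \<in> K" "0 \<le> u" "0 \<le> v" "u + v = 1"
    then obtain \<mu>1 t1 \<mu>2 t2 where h: "\<forall>i<k. \<mu>1 i \<ge> 0" "t1 \<ge> 0" "x = ((\<Sum>i<k. \<mu>1 i *\<^sub>R \<phi> i), (\<Sum>i<k. \<mu>1 i * b i) + t1)"
      "\<forall>i<k. \<mu>2 i \<ge> 0" "t2 \<ge> 0" "y = ((\<Sum>i<k. \<mu>2 i *\<^sub>R \<phi> i), (\<Sum>i<k. \<mu>2 i * b i) + t2)"
      unfolding K_def by blast
    show "u *\<^sub>R x + v *\<^sub>R y \<in> K" unfolding K_def
      apply (rule CollectI, rule exI[of _ "\<lambda>i. u * \<mu>1 i + v * \<mu>2 i"], rule exI[of _ "u * t1 + v * t2"])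
      using h \<open>0 \<le> u\<close> \<open>0 \<le> v\<close>
      by (auto simp: scaleR_sum_right sum.distrib scaleR_add_left sum_distrib_left algebra_simps)
  qed
  have conicK: "conic K"
    unfolding conic_def
  proof (intro allI impI)
    fix x and u :: real assume "x \<in> K" "0 \<le> u"
    then obtain \<mu>1 t1 where h: "\<forall>i<k. \<mu>1 i \<ge> 0" "t1 \<ge> 0" "x = ((\<Sum>i<k. \<mu>1 i *\<^sub>R \<phi> i), (\<Sum>i<k. \<mu>1 i * b i) + t1)"
      unfolding K_def by blast
    show "u *\<^sub>R x \<in> K" unfolding K_def
      apply (rule CollectI, rule exI[of _ "\<lambda>i. u * \<mu>1 i"], rule exI[of _ "u * t1"])
      using h \<open>0 \<le> u\<close>
      by (auto simp: scaleR_sum_right sum_distrib_left algebra_simps)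
  qed
  define C where "C = conic hull (convex hull G)"
  have CK: "C \<subseteq> K" unfolding C_def
    by (intro hull_minimal conicK convK GK)
  have "polytope (convex hull G)" unfolding polytope_def by (rule exI[of _ G]) (simp add: G_def)
  then have clC: "closed C" unfolding C_def
    using polyhedron_conic_hull_polytope polyhedron_imp_closed by blast
  have cvC: "convex C" unfolding C_def by (intro convex_conic_hull convex_convex_hull)
  have GC: "G \<subseteq> C" unfolding C_def
    using hull_subset[of G convex] hull_subset[of "convex hull G" conic] by blast
  have "(\<psi>, c) \<notin> C"
  proof
    assume "(\<psi>, c) \<in> C"
    then obtain \<mu> t where m: "\<forall>i<k. \<mu> i \<ge> 0" "t \<ge> 0" "\<psi> = (\<Sum>i<k. \<mu> i *\<^sub>R \<phi> i)" "c = (\<Sum>i<k. \<mu> i * b i) + t"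
      using CK unfolding K_def by blast
    then have "(\<Sum>i<k. \<mu> i * b i) \<le> c" by simp
    then show False using nex m by blast
  qed
  then obtain a \<beta> where ab: "inner a (\<psi>, c) < \<beta>" "\<forall>x\<in>C. inner a x > \<beta>"
    using separating_hyperplane_closed_point[OF cvC clC] by blast
  have "0 \<in> C" unfolding C_def by (simp add: G_def)
  then have "inner a 0 > \<beta>" using ab by blast
  then have b0: "\<beta> < 0" by simp
  have pos: "inner a x \<ge> 0" if "x \<in> C" for x
  proof (rule ccontr)
    assume "\<not> ?thesis"
    then have neg: "inner a x < 0" by simp
    define t where "t = \<beta> / inner a x"
    have "t \<ge> 0" using neg b0 by (simp add: t_def divide_nonpos_neg)
    then have "t *\<^sub>R x \<in> C" using that conic_conic_hull unfolding C_def conic_def by blast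
    moreover have "inner a (t *\<^sub>R x) = \<beta>" using neg by (simp add: t_def)
    ultimately show False using ab by fastforce
  qed
  obtain y s where a: "a = (y, s)" by (cases a) auto
  have s0: "s \<ge> 0" using pos[of "(0,1)"] GC by (auto simp: a G_def)
  have gi: "y \<bullet> \<phi> i + s * b i \<ge> 0" if "i < k" for i
    using pos[of "(\<phi> i, b i)"] GC that by (auto simp: a G_def)
  have tgt: "y \<bullet> \<psi> + s * c < 0" using ab b0 by (simp add: a)
  show False
  proof (cases "s > 0")
    case True
    define l where "l = (1/s) *\<^sub>R y"
    have "\<forall>i<k. \<phi> i \<bullet> l \<ge> - b i"
    proof (intro allI impI)
      fix i assume "i < k"
      then have "y \<bullet> \<phi> i \<ge> - (s * b i)" using gi by force
      then have "(y \<bullet> \<phi> i) / s \<ge> - b i" using True by (simp add: field_simps)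
      then show "\<phi> i \<bullet> l \<ge> - b i" by (simp add: l_def inner_commute)
    qed
    then have "\<psi> \<bullet> l \<ge> - c" using imp by blast
    moreover have "(y \<bullet> \<psi>) / s < - c" using tgt True by (simp add: field_simps)
    ultimately show False by (simp add: l_def inner_commute)
  next
    case False
    then have s: "s = 0" using s0 by simp
    obtain l0 where l0: "\<forall>i<k. \<phi> i \<bullet> l0 \<ge> - b i" using ne by blast
    have yp: "y \<bullet> \<psi> < 0" using tgt s by simp
    define t where "t = \<bar>\<psi> \<bullet> l0 + c\<bar> / (- (y \<bullet> \<psi>)) + 1"
    have t0: "t > 0" using yp by (simp add: t_def add_pos_nonneg)
    define l where "l = l0 + t *\<^sub>R y"
    have "\<forall>i<k. \<phi> i \<bullet> l \<ge> - b i"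
    proof (intro allI impI)
      fix i assume "i < k"
      then have "y \<bullet> \<phi> i \<ge> 0" "\<phi> i \<bullet> l0 \<ge> - b i" using gi l0 s by auto
      moreover have "\<phi> i \<bullet> l = \<phi> i \<bullet> l0 + t * (y \<bullet> \<phi> i)"
        by (simp add: l_def inner_add_right inner_commute)
      moreover have "t * (y \<bullet> \<phi> i) \<ge> 0" using t0 calculation(1) by simp
      ultimately show "\<phi> i \<bullet> l \<ge> - b i" by linarith
    qed
    then have "\<psi> \<bullet> l \<ge> - c" using imp by blast
    moreover have "\<psi> \<bullet> l < - c"
    proof -
      have "t * (y \<bullet> \<psi>) = - \<bar>\<psi> \<bullet> l0 + c\<bar> + y \<bullet> \<psi>" using yp by (simp add: t_def field_simps)
      moreover have "\<psi> \<bullet> l = \<psi> \<bullet> l0 + t * (y \<bullet> \<psi>)"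
        by (simp add: l_def inner_add_right inner_commute)
      ultimately show ?thesis using yp abs_ge_self[of "\<psi> \<bullet> l0 + c"] by linarith
    qed
    ultimately show False by simp
  qed
qed

lemma farkas_rat:
  fixes \<phi> :: "nat \<Rightarrow> real^'a" and \<psi> :: "real^'a" and b :: "nat \<Rightarrow> real"
  assumes rat: "\<forall>i<k. rational_vec (\<phi> i)" "rational_vec \<psi>"
    and ne: "\<exists>l. \<forall>i<k. \<phi> i \<bullet> l \<ge> - b i"
    and imp: "\<forall>l. (\<forall>i<k. \<phi> i \<bullet> l \<ge> - b i) \<longrightarrow> \<psi> \<bullet> l \<ge> - c"
  shows "\<exists>\<mu>. (\<forall>i<k. \<mu> i \<ge> 0 \<and> \<mu> i \<in> \<rat>) \<and> (\<Sum>i<k. \<mu> i *\<^sub>R \<phi> i) = \<psi> \<and> (\<Sum>i<k. \<mu> i * b i) \<le> c"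
proof -
  define good where "good \<mu> \<longleftrightarrow> (\<forall>i<k. \<mu> i \<ge> 0) \<and> (\<Sum>i<k. \<mu> i *\<^sub>R \<phi> i) = \<psi> \<and> (\<Sum>i<k. \<mu> i * b i) \<le> c" for \<mu>
  define sz where "sz \<mu> = card {i. i<k \<and> \<mu> i \<noteq> 0}" for \<mu> :: "nat \<Rightarrow> real"
  obtain \<mu>0 where "good \<mu>0" using farkas_real[OF ne imp] by (auto simp: good_def)
  then obtain \<mu> where g: "good \<mu>" and minl: "\<And>\<mu>'. good \<mu>' \<Longrightarrow> sz \<mu> \<le> sz \<mu>'"
    using ex_has_least_nat[of good \<mu>0 sz] by blast
  have g1: "\<forall>i<k. \<mu> i \<ge> 0" and g2: "(\<Sum>i<k. \<mu> i *\<^sub>R \<phi> i) = \<psi>" and g3: "(\<Sum>i<k. \<mu> i * b i) \<le> c"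
    using g by (auto simp: good_def)
  define S where "S = {i. i<k \<and> \<mu> i \<noteq> 0}"
  have finS: "finite S" by (simp add: S_def)
  obtain l0 where l0: "\<forall>i<k. \<phi> i \<bullet> l0 \<ge> - b i" using ne by blast
  have fpos: "(\<Sum>i<k. e i * b i) \<ge> 0" if "\<forall>i<k. e i \<ge> 0" "(\<Sum>i<k. e i *\<^sub>R \<phi> i) = 0" for e
  proof -
    have "(\<Sum>i<k. e i * b i) \<ge> (\<Sum>i<k. e i * (-(\<phi> i \<bullet> l0)))"
    proof (rule sum_mono)
      fix i assume "i \<in> {..<k}"
      then have "-(\<phi> i \<bullet> l0) \<le> b i" "e i \<ge> 0" using that l0 by auto
      then show "e i * (-(\<phi> i \<bullet> l0)) \<le> e i * b i" by (rule mult_left_mono)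
    qed
    also have "(\<Sum>i<k. e i * (-(\<phi> i \<bullet> l0))) = - ((\<Sum>i<k. e i *\<^sub>R \<phi> i) \<bullet> l0)"
      by (simp add: inner_sum_left sum_negf)
    finally show ?thesis using that by simp
  qed
  have indep: "\<forall>i<k. \<delta> i = 0" if sup: "\<forall>i<k. \<mu> i = 0 \<longrightarrow> \<delta> i = 0" and dep: "(\<Sum>i<k. \<delta> i *\<^sub>R \<phi> i) = 0" for \<delta>
  proof (rule ccontr)
    assume nz: "\<not> (\<forall>i<k. \<delta> i = 0)"
    have depm: "(\<Sum>i<k. (- \<delta> i) *\<^sub>R \<phi> i) = 0" using dep by (simp add: sum_negf)
    have bm: "(\<Sum>i<k. (- \<delta> i) * b i) = - (\<Sum>i<k. \<delta> i * b i)" by (simp add: sum_negf)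
    obtain d where d1: "\<forall>i<k. \<mu> i = 0 \<longrightarrow> d i = 0" and d2: "(\<Sum>i<k. d i *\<^sub>R \<phi> i) = 0"
      and d3: "(\<Sum>i<k. d i * b i) \<le> 0" and d4: "\<exists>i<k. d i < 0"
    proof (cases "(\<Sum>i<k. \<delta> i * b i) \<le> 0")
      case True
      show ?thesis
      proof (cases "\<exists>i<k. \<delta> i < 0")
        case True2: True
        show ?thesis by (rule that[of \<delta>]) (use sup dep True True2 in auto)
      next
        case False
        then have "\<forall>i<k. \<delta> i \<ge> 0" by auto
        then have "(\<Sum>i<k. \<delta> i * b i) \<ge> 0" using fpos[of \<delta>] dep by blast
        moreover obtain i where "i < k" "\<delta> i > 0" using nz False by force
        ultimately show ?thesis using True sup depm bm by (intro that[of "\<lambda>i. - \<delta> i"]) auto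
      qed
    next
      case False
      have "\<exists>i<k. \<delta> i > 0"
      proof (rule ccontr)
        assume "\<not> ?thesis"
        then have "\<forall>i<k. - \<delta> i \<ge> 0" by auto
        then have "(\<Sum>i<k. (- \<delta> i) * b i) \<ge> 0" using fpos[of "\<lambda>i. - \<delta> i"] depm by blast
        then show False using False bm by simp
      qed
      then show ?thesis using False sup depm bm by (intro that[of "\<lambda>i. - \<delta> i"]) auto
    qed
    define I where "I = {i. i<k \<and> d i < 0}"
    have finI: "finite I" "I \<noteq> {}" using d4 by (auto simp: I_def)
    define r where "r i = \<mu> i / (- d i)" for i
    have "Min (r ` I) \<in> r ` I" by (rule Min_in) (use finI in auto)
    then obtain i0 where i0: "i0 \<in> I" "Min (r ` I) = r i0" by auto
    have tmin: "r i0 \<le> r i" if "i \<in> I" for i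
    proof -
      have "Min (r ` I) \<le> r i" by (rule Min_le) (use finI that in auto)
      then show ?thesis using i0 by simp
    qed
    define t where "t = r i0"
    have i0k: "i0 < k" "d i0 < 0" using i0 by (auto simp: I_def)
    have t0: "t \<ge> 0" using g1[rule_format, OF i0k(1)] i0k(2) by (simp add: t_def r_def divide_nonneg_neg)
    define \<mu>' where "\<mu>' i = \<mu> i + t * d i" for i
    have "good \<mu>'"
      unfolding good_def
    proof (intro conjI allI impI)
      fix i assume ik: "i < k"
      show "\<mu>' i \<ge> 0"
      proof (cases "d i < 0")
        case True
        then have "t \<le> \<mu> i / (- d i)" using tmin[of i] ik by (auto simp: I_def t_def r_def)
        then have "t * (- d i) \<le> \<mu> i" using True by (simp add: field_simps)
        then show ?thesis by (simp add: \<mu>'_def algebra_simps)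
      next
        case False
        then show ?thesis using t0 g1 ik by (simp add: \<mu>'_def)
      qed
    next
      have "(\<Sum>i<k. \<mu>' i *\<^sub>R \<phi> i) = (\<Sum>i<k. \<mu> i *\<^sub>R \<phi> i) + (\<Sum>i<k. t *\<^sub>R (d i *\<^sub>R \<phi> i))"
        by (simp add: \<mu>'_def scaleR_add_left sum.distrib)
      also have "\<dots> = (\<Sum>i<k. \<mu> i *\<^sub>R \<phi> i) + t *\<^sub>R (\<Sum>i<k. d i *\<^sub>R \<phi> i)"
        by (simp only: scaleR_sum_right)
      finally show "(\<Sum>i<k. \<mu>' i *\<^sub>R \<phi> i) = \<psi>" using g2 d2 by simp
    next
      have "(\<Sum>i<k. \<mu>' i * b i) = (\<Sum>i<k. \<mu> i * b i) + (\<Sum>i<k. t * (d i * b i))"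
        by (simp add: \<mu>'_def distrib_right sum.distrib mult.assoc)
      also have "\<dots> = (\<Sum>i<k. \<mu> i * b i) + t * (\<Sum>i<k. d i * b i)"
        by (simp only: sum_distrib_left)
      also have "\<dots> \<le> c"
      proof -
        have "t * (\<Sum>i<k. d i * b i) \<le> 0" using t0 d3 by (rule mult_nonneg_nonpos)
        then show ?thesis using g3 by linarith
      qed
      finally show "(\<Sum>i<k. \<mu>' i * b i) \<le> c" .
    qed
    moreover have "sz \<mu>' < sz \<mu>"
    proof -
      have mi0: "\<mu> i0 \<noteq> 0" using d1 i0k by force
      have "\<mu>' i0 = 0" using i0k by (simp add: \<mu>'_def t_def r_def)
      then have "{i. i<k \<and> \<mu>' i \<noteq> 0} \<subseteq> S - {i0}" using d1 by (auto simp: S_def \<mu>'_def)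
      moreover have "S - {i0} \<subset> S" using mi0 i0k by (auto simp: S_def)
      ultimately have "{i. i<k \<and> \<mu>' i \<noteq> 0} \<subset> S" by blast
      then show ?thesis unfolding sz_def S_def by (intro psubset_card_mono) auto
    qed
    ultimately show False using minl[of \<mu>'] by simp
  qed
  have ratmu: "\<mu> i \<in> \<rat>" if ik: "i < k" for i
  proof (cases "\<mu> i = 0")
    case True then show ?thesis by simp
  next
    case False
    then have iS: "i \<in> S" using ik by (simp add: S_def)
    have fB: "finite (\<phi> ` (S - {i}))" using finS by simp
    obtain p where p: "\<forall>x. rational_vec x \<longrightarrow> rational_vec (p x)" "\<forall>x. \<forall>b\<in>\<phi> ` (S - {i}). p x \<bullet> b = 0"
      "\<forall>x. x - p x \<in> span (\<phi> ` (S - {i}))"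
    proof -
      have "\<forall>b\<in>\<phi> ` (S - {i}). rational_vec b" using rat by (auto simp: S_def)
      from proj_exists[OF fB this] show ?thesis using that by blast
    qed
    define y where "y = p (\<phi> i)"
    have ry: "rational_vec y" using p rat ik by (simp add: y_def)
    have yl: "y \<bullet> \<phi> l = 0" if "l \<in> S - {i}" for l using p that by (simp add: y_def)
    have sp: "\<phi> i - y \<in> span (\<phi> ` (S - {i}))" using p by (simp add: y_def)
    have "y \<bullet> (\<phi> i - y) = 0" using orth_span[OF _ sp] yl by auto
    then have yy: "y \<bullet> \<phi> i = y \<bullet> y" by (simp add: inner_diff_right)
    have ynz: "y \<noteq> 0"
    proof
      assume "y = 0"
      then have "\<phi> i \<in> span (\<phi> ` (S - {i}))" using sp by simp
      then obtain cc where cc: "\<phi> i = (\<Sum>j\<in>S - {i}. cc j *\<^sub>R \<phi> j)"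
        using span_image_coeffs[of "S - {i}" "\<phi> i" \<phi>] finS by blast
      define \<delta> where "\<delta> j = (if j = i then 1 else if j \<in> S - {i} then - cc j else 0)" for j
      have neg: "(\<Sum>j\<in>S - {i}. \<delta> j *\<^sub>R \<phi> j) = (\<Sum>j\<in>S - {i}. - (cc j *\<^sub>R \<phi> j))"
        by (rule sum.cong) (auto simp: \<delta>_def)
      have "(\<Sum>j<k. \<delta> j *\<^sub>R \<phi> j) = (\<Sum>j\<in>S. \<delta> j *\<^sub>R \<phi> j)"
        by (rule sum.mono_neutral_right) (use iS in \<open>auto simp: S_def \<delta>_def\<close>)
      also have "\<dots> = \<delta> i *\<^sub>R \<phi> i + (\<Sum>j\<in>S - {i}. \<delta> j *\<^sub>R \<phi> j)"
        using finS iS by (simp add: sum.remove)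
      also have "\<dots> = \<phi> i - (\<Sum>j\<in>S - {i}. cc j *\<^sub>R \<phi> j)"
        unfolding neg by (simp add: \<delta>_def sum_negf)
      finally have "(\<Sum>j<k. \<delta> j *\<^sub>R \<phi> j) = 0" using cc by simp
      moreover have "\<forall>j<k. \<mu> j = 0 \<longrightarrow> \<delta> j = 0" using False by (auto simp: \<delta>_def S_def)
      ultimately have "\<forall>j<k. \<delta> j = 0" using indep by blast
      then show False using ik by (auto simp: \<delta>_def)
    qed
    have "\<psi> \<bullet> y = (\<Sum>j<k. \<mu> j * (\<phi> j \<bullet> y))" using g2 by (auto simp: inner_sum_left)
    also have "\<dots> = (\<Sum>j<k. if j = i then \<mu> i * (\<phi> i \<bullet> y) else 0)"
    proof (rule sum.cong)
      fix j assume "j \<in> {..<k}"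
      then show "\<mu> j * (\<phi> j \<bullet> y) = (if j = i then \<mu> i * (\<phi> i \<bullet> y) else 0)"
        using yl[of j] by (cases "j = i") (auto simp: S_def inner_commute)
    qed simp
    also have "\<dots> = \<mu> i * (\<phi> i \<bullet> y)" using ik by simp
    finally have eq: "\<psi> \<bullet> y = \<mu> i * (y \<bullet> y)" using yy by (simp add: inner_commute)
    have "y \<bullet> y \<noteq> 0" using ynz by simp
    then have "\<mu> i = (\<psi> \<bullet> y) / (y \<bullet> y)" using eq by simp
    then show ?thesis using rv_inner[OF rat(2) ry] rv_inner[OF ry ry] by simp
  qed
  show ?thesis using g1 g2 g3 ratmu by blast
qed



lemma weak_dual:
  fixes \<phi> :: "nat \<Rightarrow> real^'a" and ch :: "nat \<Rightarrow> real^'v"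
  assumes "\<forall>i<k. \<mu> i \<ge> 0 \<and> \<mu> i \<in> \<rat>" "(\<Sum>i<k. \<mu> i *\<^sub>R \<phi> i) = \<psi>"
    "(chp - (\<Sum>i<k. \<mu> i *\<^sub>R ch i)) \<bullet> w \<ge> 0" "l \<in> polyP k \<phi> ch w"
  shows "\<psi> \<bullet> l \<ge> - (chp \<bullet> w)"
proof -
  have "\<psi> \<bullet> l = (\<Sum>i<k. \<mu> i * (\<phi> i \<bullet> l))" using assms(2) by (auto simp: inner_sum_left)
  also have "\<dots> \<ge> (\<Sum>i<k. \<mu> i * (-(ch i \<bullet> w)))"
  proof (rule sum_mono)
    fix i assume "i \<in> {..<k}"
    then have "-(ch i \<bullet> w) \<le> \<phi> i \<bullet> l" "\<mu> i \<ge> 0" using assms(1,4) by (auto simp: polyP_def)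
    then show "\<mu> i * (-(ch i \<bullet> w)) \<le> \<mu> i * (\<phi> i \<bullet> l)" by (rule mult_left_mono)
  qed
  finally have "\<psi> \<bullet> l \<ge> - ((\<Sum>i<k. \<mu> i *\<^sub>R ch i) \<bullet> w)" by (simp add: inner_sum_left sum_negf)
  moreover have "(\<Sum>i<k. \<mu> i *\<^sub>R ch i) \<bullet> w \<le> chp \<bullet> w" using assms(3) by (simp add: inner_diff_left)
  ultimately show ?thesis by simp
qed

lemma one_side:
  fixes ph1 :: "nat \<Rightarrow> real^'a" and ch1 :: "nat \<Rightarrow> real^'v" and ph2 ch2
  assumes "\<forall>i<k1. rational_vec (ph1 i)" "\<forall>j<k2. rational_vec (ph2 j)"
    and "polyP k1 ph1 ch1 v \<subseteq> polyP k2 ph2 ch2 v" "polyP k1 ph1 ch1 v \<noteq> {}"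
  shows "\<exists>M. \<forall>j<k2. (\<forall>i<k1. M j i \<ge> 0 \<and> M j i \<in> \<rat>) \<and> (\<Sum>i<k1. M j i *\<^sub>R ph1 i) = ph2 j
      \<and> (\<Sum>i<k1. M j i * (ch1 i \<bullet> v)) \<le> ch2 j \<bullet> v"
proof -
  have "\<forall>j. \<exists>\<mu>. j < k2 \<longrightarrow> (\<forall>i<k1. \<mu> i \<ge> 0 \<and> \<mu> i \<in> \<rat>) \<and> (\<Sum>i<k1. \<mu> i *\<^sub>R ph1 i) = ph2 j
      \<and> (\<Sum>i<k1. \<mu> i * (ch1 i \<bullet> v)) \<le> ch2 j \<bullet> v"
  proof (intro allI)
    fix j
    show "\<exists>\<mu>. j < k2 \<longrightarrow> (\<forall>i<k1. \<mu> i \<ge> 0 \<and> \<mu> i \<in> \<rat>) \<and> (\<Sum>i<k1. \<mu> i *\<^sub>R ph1 i) = ph2 j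
      \<and> (\<Sum>i<k1. \<mu> i * (ch1 i \<bullet> v)) \<le> ch2 j \<bullet> v"
    proof (cases "j < k2")
      case True
      have ne: "\<exists>l. \<forall>i<k1. ph1 i \<bullet> l \<ge> - (ch1 i \<bullet> v)" using assms(4) by (auto simp: polyP_def)
      have imp: "\<forall>l. (\<forall>i<k1. ph1 i \<bullet> l \<ge> - (ch1 i \<bullet> v)) \<longrightarrow> ph2 j \<bullet> l \<ge> - (ch2 j \<bullet> v)"
        using assms(3) True by (auto simp: polyP_def subset_iff)
      show ?thesis using farkas_rat[OF assms(1) _ ne imp] assms(2) True by blast
    qed simp
  qed
  then show ?thesis by (rule choice)
qed

theorem lemma8p7:
  fixes k1 k2 :: nat
    and ph1 ph2 :: "nat \<Rightarrow> real^'a"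
    and ch1 ch2 :: "nat \<Rightarrow> real^'v"
    and v :: "real^'v"
  assumes "\<forall>i<k1. rational_vec (ph1 i) \<and> rational_vec (ch1 i)"
    and "\<forall>j<k2. rational_vec (ph2 j) \<and> rational_vec (ch2 j)"
    and "polyP k1 ph1 ch1 v = polyP k2 ph2 ch2 v"
    and "aff_dim (polyP k1 ph1 ch1 v) = int CARD('a)"
  shows "\<forall>U. open U \<and> v \<in> U \<longrightarrow>
           (\<exists>v'\<in>U. rational_vec v' \<and> polyP k1 ph1 ch1 v' = polyP k2 ph2 ch2 v')"
proof (intro allI impI)
  fix U assume U: "open U \<and> v \<in> U"
  have ne1: "polyP k1 ph1 ch1 v \<noteq> {}"
  proof
    assume "polyP k1 ph1 ch1 v = {}"
    then have "aff_dim (polyP k1 ph1 ch1 v) = -1" by simp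
    then show False using assms(4) by simp
  qed
  have ne2: "polyP k2 ph2 ch2 v \<noteq> {}" using ne1 assms(3) by simp
  have r1: "\<forall>i<k1. rational_vec (ph1 i)" using assms(1) by blast
  have r2: "\<forall>j<k2. rational_vec (ph2 j)" using assms(2) by blast
  have sub1: "polyP k1 ph1 ch1 v \<subseteq> polyP k2 ph2 ch2 v" using assms(3) by simp
  have sub2: "polyP k2 ph2 ch2 v \<subseteq> polyP k1 ph1 ch1 v" using assms(3) by simp
  obtain M where M: "\<forall>j<k2. (\<forall>i<k1. M j i \<ge> 0 \<and> M j i \<in> \<rat>) \<and> (\<Sum>i<k1. M j i *\<^sub>R ph1 i) = ph2 j
      \<and> (\<Sum>i<k1. M j i * (ch1 i \<bullet> v)) \<le> ch2 j \<bullet> v"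
    using one_side[OF r1 r2 sub1 ne1] by blast
  obtain N where N: "\<forall>j<k1. (\<forall>i<k2. N j i \<ge> 0 \<and> N j i \<in> \<rat>) \<and> (\<Sum>i<k2. N j i *\<^sub>R ph2 i) = ph1 j
      \<and> (\<Sum>i<k2. N j i * (ch2 i \<bullet> v)) \<le> ch1 j \<bullet> v"
    using one_side[OF r2 r1 sub2 ne2] by blast
  define d where "d j = ch2 j - (\<Sum>i<k1. M j i *\<^sub>R ch1 i)" for j
  define e where "e j = ch1 j - (\<Sum>i<k2. N j i *\<^sub>R ch2 i)" for j
  define D where "D = d ` {..<k2} \<union> e ` {..<k1}"
  have fD: "finite D" by (simp add: D_def)
  have rD: "\<forall>x\<in>D. rational_vec x"
    using assms(1,2) M N unfolding D_def d_def e_def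
    by (auto intro!: rv_diff rv_sum rv_scale)
  have pD: "\<forall>x\<in>D. x \<bullet> v \<ge> 0"
    using M N unfolding D_def d_def e_def
    by (auto simp: inner_diff_left inner_sum_left)
  obtain w where w: "w \<in> U" "rational_vec w" "\<forall>x\<in>D. x \<bullet> w \<ge> 0"
    using cone_dense[OF fD rD pD] U by blast
  have "polyP k1 ph1 ch1 w = polyP k2 ph2 ch2 w"
  proof
    show "polyP k1 ph1 ch1 w \<subseteq> polyP k2 ph2 ch2 w"
    proof
      fix l assume l: "l \<in> polyP k1 ph1 ch1 w"
      have "ph2 j \<bullet> l \<ge> - (ch2 j \<bullet> w)" if "j < k2" for j
        using weak_dual[of k1 "M j" ph1 "ph2 j" "ch2 j" ch1 w l] M that w(3) l
        by (auto simp: D_def d_def)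
      then show "l \<in> polyP k2 ph2 ch2 w" by (simp add: polyP_def)
    qed
    show "polyP k2 ph2 ch2 w \<subseteq> polyP k1 ph1 ch1 w"
    proof
      fix l assume l: "l \<in> polyP k2 ph2 ch2 w"
      have "ph1 j \<bullet> l \<ge> - (ch1 j \<bullet> w)" if "j < k1" for j
        using weak_dual[of k2 "N j" ph2 "ph1 j" "ch1 j" ch2 w l] N that w(3) l
        by (auto simp: D_def e_def)
      then show "l \<in> polyP k1 ph1 ch1 w" by (simp add: polyP_def)
    qed
  qed
  then show "\<exists>v'\<in>U. rational_vec v' \<and> polyP k1 ph1 ch1 v' = polyP k2 ph2 ch2 v'" using w by blast
qed

end
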